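(* Let $N\geq 2$ and let $\Sigma$ be the one-sided shift on $\{0,1,\dots,N-1\}^{\mathbb{N}_0}$, ordered lexicographically. Let $\pi\in\mathcal{S}_L$ be a spiralling pattern with $D$ segments $p_1<\dots<p_D$ of lengths $h_1,\dots,h_D$, where $h_1\geq 2$. Then $\pi$ is forbidden for $\Sigma$ if (a) $D\geq N$ and $h_D\geq 2$, or (b) $D\geq N+1$ and $h_D=1$; otherwise $\pi$ is allowed for $\Sigma$.
   Context: $\{0,1,\dots,N-1\}^{\mathbb{N}_0}$ is the set of sequences $\omega=(\omega_0,\omega_1,\dots)$ with $\omega_n\in\{0,\dots,N-1\}$, and $\Sigma(\omega_0,\omega_1,\dots)=(\omega_1,\omega_2,\dots)$; $\omega<\omega'$ lexicographically iff at the first index $n$ where they differ, $\omega_n<\omega'_n$. $\mathcal{S}_L$ is the set of permutations $\pi=[\pi_0,\dots,\pi_{L-1}]$ of $\{0,\dots,L-1\}$. $\omega$ defines $\pi$ if $\Sigma^{\pi_0}(\omega)<\dots<\Sigma^{\pi_{L-1}}(\omega)$; $\pi$ is allowed if some $\omega$ defines it and forbidden otherwise. A partition of $0,1,\dots,L-1$ into $D\geq 2$ segments is a splitting $p_1<p_2<\dots<p_D$ where $p_d$ is the increasing run $e_d,e_d+1,\dots,e_d+h_d-1$ with $h_d\geq1$, $h_1+\dots+h_D=L$, $e_1=0$ and $e_{d+1}=e_d+h_d$. The reversed segment is $\overleftarrow{p_d}=e_d+h_d-1,\dots,e_d+1,e_d$. A spiralling pattern of length $L$ is a pattern of the form $\pi=[\dots,\overleftarrow{p_5},\overleftarrow{p_3},\overleftarrow{p_1},p_2,p_4,\dots]$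 (all odd-indexed segments reversed, placed to the left in decreasing order of index, followed by all even-indexed segments in increasing order of index), or its mirrored pattern $[\dots,\overleftarrow{p_4},\overleftarrow{p_2},p_1,p_3,\dots]$ (even-indexed segments reversed on the left in decreasing order of index, then odd-indexed segments in increasing order of index). *)

theory Defs
  imports Main
begin

text \<open>Sequences in {0,...,N-1}^N0 are functions nat => nat with values below N.\<close>

definition shift :: "nat \<Rightarrow> (nat \<Rightarrow> nat) \<Rightarrow> (nat \<Rightarrow> nat)" where
  "shift k \<omega> = (\<lambda>n. \<omega> (n + k))"

definition lex_less :: "(nat \<Rightarrow> nat) \<Rightarrow> (nat \<Rightarrow> nat) \<Rightarrow> bool" where
  "lex_less \<omega> \<omega>' \<longleftrightarrow> (\<exists>n. (\<forall>i<n. \<omega> i = \<omega>' i) \<and> \<omega> n < \<omega>' n)"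

definition is_pattern :: "nat list \<Rightarrow> bool" where
  "is_pattern \<pi> \<longleftrightarrow> distinct \<pi> \<and> set \<pi> = {0..<length \<pi>}"

definition defines_pattern :: "(nat \<Rightarrow> nat) \<Rightarrow> nat list \<Rightarrow> bool" where
  "defines_pattern \<omega> \<pi> \<longleftrightarrow>
     (\<forall>i. Suc i < length \<pi> \<longrightarrow> lex_less (shift (\<pi> ! i) \<omega>) (shift (\<pi> ! Suc i) \<omega>))"

definition allowed :: "nat \<Rightarrow> nat list \<Rightarrow> bool" where
  "allowed N \<pi> \<longleftrightarrow> (\<exists>\<omega>. (\<forall>n. \<omega> n < N) \<and> defines_pattern \<omega> \<pi>)"

definition forbidden :: "nat \<Rightarrow> nat list \<Rightarrow> bool" where
  "forbidden N \<pi> \<longleftrightarrow> \<not> allowed N \<pi>"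

text \<open>Segments, 0-indexed: segment j (paper's p_{j+1}) of the partition with lengths hs.\<close>
definition seg :: "nat list \<Rightarrow> nat \<Rightarrow> nat list" where
  "seg hs j = [sum_list (take j hs) ..< sum_list (take j hs) + hs ! j]"

text \<open>Spiralling pattern [..., rev p5, rev p3, rev p1, p2, p4, ...]; paper index d = j+1,
  so odd d corresponds to even j.\<close>
definition spiral :: "nat list \<Rightarrow> nat list" where
  "spiral hs =
     concat (map (\<lambda>j. rev (seg hs j)) (rev (filter even [0..<length hs])))
     @ concat (map (seg hs) (filter odd [0..<length hs]))"

text \<open>Mirrored spiralling pattern [..., rev p4, rev p2, p1, p3, ...].\<close>
definition spiral_mirror :: "nat list \<Rightarrow> nat list" where
  "spiral_mirror hs =
     concat (map (\<lambda>j. rev (seg hs j)) (rev (filter odd [0..<length hs])))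
     @ concat (map (seg hs) (filter even [0..<length hs]))"

end

theory Submission
  imports Defs
begin


lemma lex_less_step:
  "lex_less x y \<longleftrightarrow> x 0 < y 0 \<or> (x 0 = y 0 \<and> lex_less (\<lambda>n. x (Suc n)) (\<lambda>n. y (Suc n)))"
proof
  assume "lex_less x y"
  then obtain n where n: "\<forall>i<n. x i = y i" "x n < y n" unfolding lex_less_def by blast
  show "x 0 < y 0 \<or> (x 0 = y 0 \<and> lex_less (\<lambda>n. x (Suc n)) (\<lambda>n. y (Suc n)))"
  proof (cases n)
    case 0 then show ?thesis using n by simp
  next
    case (Suc m)
    then have "x 0 = y 0" using n by auto
    moreover have "lex_less (\<lambda>n. x (Suc n)) (\<lambda>n. y (Suc n))"
      unfolding lex_less_def using n Suc by (intro exI[of _ m]) auto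
    ultimately show ?thesis by simp
  qed
next
  assume "x 0 < y 0 \<or> (x 0 = y 0 \<and> lex_less (\<lambda>n. x (Suc n)) (\<lambda>n. y (Suc n)))"
  then show "lex_less x y"
  proof
    assume "x 0 < y 0" then show ?thesis unfolding lex_less_def by (intro exI[of _ 0]) auto
  next
    assume a: "x 0 = y 0 \<and> lex_less (\<lambda>n. x (Suc n)) (\<lambda>n. y (Suc n))"
    then obtain n where n: "\<forall>i<n. x (Suc i) = y (Suc i)" "x (Suc n) < y (Suc n)"
      unfolding lex_less_def by blast
    have "\<forall>i<Suc n. x i = y i"
    proof (intro allI impI)
      fix i assume "i < Suc n" then show "x i = y i" using a n by (cases i) auto
    qed
    then show ?thesis unfolding lex_less_def using n by blast
  qed
qed

lemma lex_irrefl: "\<not> lex_less x x" unfolding lex_less_def by auto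

lemma lex_trans: assumes "lex_less x y" "lex_less y z" shows "lex_less x z"
proof -
  obtain n where n: "\<forall>i<n. x i = y i" "x n < y n" using assms(1) unfolding lex_less_def by blast
  obtain m where m: "\<forall>i<m. y i = z i" "y m < z m" using assms(2) unfolding lex_less_def by blast
  show ?thesis unfolding lex_less_def
  proof (cases "n < m")
    case True
    have "\<forall>i<n. x i = z i" using n(1) m(1) True by simp
    moreover have "x n < z n" using n(2) m(1) True by simp
    ultimately show "\<exists>k. (\<forall>i<k. x i = z i) \<and> x k < z k" by blast
  next
    case False
    have "\<forall>i<m. x i = z i" using n(1) m(1) False by simp
    moreover have "x m \<le> y m" using n False by (cases "n = m") auto
    ultimately show "\<exists>k. (\<forall>i<k. x i = z i) \<and> x k < z k" using m(2) by (meson le_less_trans)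
  qed
qed

lemma lex_asym: "lex_less x y \<Longrightarrow> \<not> lex_less y x"
  using lex_trans lex_irrefl by blast

lemma lex_first: "lex_less x y \<Longrightarrow> x 0 \<le> y 0"
  by (auto simp: lex_less_step[of x y])

lemma shift_0[simp]: "shift p \<omega> 0 = \<omega> p" by (simp add: shift_def)
lemma shift_Suc: "(\<lambda>n. shift p \<omega> (Suc n)) = shift (Suc p) \<omega>" by (simp add: shift_def)

lemma lex_shift: "lex_less (shift p \<omega>) (shift q \<omega>) \<longleftrightarrow>
   \<omega> p < \<omega> q \<or> (\<omega> p = \<omega> q \<and> lex_less (shift (Suc p) \<omega>) (shift (Suc q) \<omega>))"
  by (subst lex_less_step) (simp add: shift_Suc)

lemma lex_shift_first: "lex_less (shift p \<omega>) (shift q \<omega>) \<Longrightarrow> \<omega> p \<le> \<omega> q"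
  using lex_first by fastforce

lemma lex_shift_eq: "lex_less (shift p \<omega>) (shift q \<omega>) \<Longrightarrow> \<omega> p = \<omega> q \<Longrightarrow>
   lex_less (shift (Suc p) \<omega>) (shift (Suc q) \<omega>)"
  using lex_shift[of p \<omega> q] by auto

lemma noinc: assumes b: "\<forall>n. \<omega> n < N" and "\<omega> p = N - 1"
  shows "\<not> lex_less (shift p \<omega>) (shift (Suc p) \<omega>)"
proof
  assume "lex_less (shift p \<omega>) (shift (Suc p) \<omega>)"
  then obtain n where n: "\<forall>i<n. \<omega> (i + p) = \<omega> (Suc i + p)" "\<omega> (n + p) < \<omega> (n + Suc p)"
    unfolding lex_less_def shift_def by auto
  have "\<omega> (i + p) = N - 1" if "i \<le> n" for i using that
  proof (induction i)
    case 0 then show ?case using assms by simp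
  next
    case (Suc i)
    then have "i < n" "\<omega> (i + p) = N - 1" by auto
    then show ?case using n(1) by (metis add_Suc)
  qed
  then have A: "\<omega> (n + p) = N - 1" by blast
  have B: "\<omega> (n + Suc p) < N" using b by simp
  have aux: "\<And>a c::nat. a = N - 1 \<Longrightarrow> a < c \<Longrightarrow> c < N \<Longrightarrow> False" by linarith
  show False using aux[OF A n(2) B] .
qed

lemma nodec: assumes "\<omega> p = 0"
  shows "\<not> lex_less (shift (Suc p) \<omega>) (shift p \<omega>)"
proof
  assume "lex_less (shift (Suc p) \<omega>) (shift p \<omega>)"
  then obtain n where n: "\<forall>i<n. \<omega> (Suc i + p) = \<omega> (i + p)" "\<omega> (n + Suc p) < \<omega> (n + p)"
    unfolding lex_less_def shift_def by auto
  have "\<omega> (i + p) = 0" if "i \<le> n" for i using that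
  proof (induction i)
    case 0 then show ?case using assms by simp
  next
    case (Suc i)
    then have "i < n" "\<omega> (i + p) = 0" by auto
    then show ?case using n(1) by (metis add_Suc)
  qed
  then have "\<omega> (n + p) = 0" by blast
  then show False using n(2) by (metis not_less_zero)
qed

lemma aux_e: "(x::nat) < N \<Longrightarrow> y < N \<Longrightarrow> (N - 1 - x = N - 1 - y) \<longleftrightarrow> y = x" by linarith
lemma aux_l: "(x::nat) < N \<Longrightarrow> y < N \<Longrightarrow> (N - 1 - x < N - 1 - y) \<longleftrightarrow> y < x" by linarith
lemma aux_b: "(x::nat) < N \<Longrightarrow> N - 1 - x < N" by linarith

definition cmp :: "nat \<Rightarrow> (nat \<Rightarrow> nat) \<Rightarrow> nat \<Rightarrow> nat" where "cmp N \<omega> = (\<lambda>n. N - 1 - \<omega> n)"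

lemma cmp_lex: assumes "\<forall>n. \<omega> n < N"
  shows "lex_less (shift p (cmp N \<omega>)) (shift q (cmp N \<omega>)) \<longleftrightarrow> lex_less (shift q \<omega>) (shift p \<omega>)"
proof -
  have e: "(N - 1 - \<omega> a = N - 1 - \<omega> b) \<longleftrightarrow> \<omega> b = \<omega> a" for a b
  proof -
    show ?thesis using aux_e[of "\<omega> a" N "\<omega> b"] assms by simp
  qed
  have l: "(N - 1 - \<omega> a < N - 1 - \<omega> b) \<longleftrightarrow> \<omega> b < \<omega> a" for a b
  proof -
    show ?thesis using aux_l[of "\<omega> a" N "\<omega> b"] assms by simp
  qed
  show ?thesis unfolding lex_less_def shift_def cmp_def by (simp only: e l)
qed

lemma cmp_bound: "\<forall>n. \<omega> n < N \<Longrightarrow> \<forall>n. cmp N \<omega> n < N"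
proof
  fix n assume "\<forall>n. \<omega> n < N"
  then have "\<omega> n < N" by blast
  then show "cmp N \<omega> n < N" unfolding cmp_def by (rule aux_b)
qed

lemma defines_iff_key:
  fixes k :: "nat \<Rightarrow> int"
  assumes s: "sorted_wrt (\<lambda>a b. k a < k b) \<pi>" and st: "set \<pi> = {0..<L}"
  shows "defines_pattern \<omega> \<pi> \<longleftrightarrow>
     (\<forall>p q. p < L \<longrightarrow> q < L \<longrightarrow> k p < k q \<longrightarrow> lex_less (shift p \<omega>) (shift q \<omega>))"
proof
  assume d: "defines_pattern \<omega> \<pi>"
  have chain: "lex_less (shift (\<pi>!i) \<omega>) (shift (\<pi>!j) \<omega>)" if "i < j" "j < length \<pi>" for i j
    using that
  proof (induction j)
    case 0 then show ?case by simp
  next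
    case (Suc j)
    have st: "lex_less (shift (\<pi>!j) \<omega>) (shift (\<pi>!Suc j) \<omega>)" using d Suc.prems unfolding defines_pattern_def by blast
    show ?case
    proof (cases "i = j")
      case True then show ?thesis using st by simp
    next
      case False then show ?thesis using Suc lex_trans st by (meson Suc_lessD less_SucE)
    qed
  qed
  show "\<forall>p q. p < L \<longrightarrow> q < L \<longrightarrow> k p < k q \<longrightarrow> lex_less (shift p \<omega>) (shift q \<omega>)"
  proof (intro allI impI)
    fix p q assume pq: "p < L" "q < L" "k p < k q"
    obtain i where i: "i < length \<pi>" "\<pi>!i = p" using pq st by (metis atLeastLessThan_iff in_set_conv_nth zero_le)
    obtain j where j: "j < length \<pi>" "\<pi>!j = q" using pq st by (metis atLeastLessThan_iff in_set_conv_nth zero_le)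
    have "i < j"
    proof (rule ccontr)
      assume "\<not> i < j"
      then have "j < i \<or> j = i" by auto
      then show False
      proof
        assume "j < i" then have "k q < k p" using sorted_wrt_nth_less[OF s _ i(1)] i j by blast
        then show False using pq by simp
      next
        assume "j = i" then show False using i j pq by simp
      qed
    qed
    then show "lex_less (shift p \<omega>) (shift q \<omega>)" using chain j i by blast
  qed
next
  assume h: "\<forall>p q. p < L \<longrightarrow> q < L \<longrightarrow> k p < k q \<longrightarrow> lex_less (shift p \<omega>) (shift q \<omega>)"
  show "defines_pattern \<omega> \<pi>" unfolding defines_pattern_def
  proof (intro allI impI)
    fix i assume i: "Suc i < length \<pi>"
    have "k (\<pi>!i) < k (\<pi>!Suc i)" using sorted_wrt_nth_less[OF s _ i] by simp
    moreover have "\<pi>!i < L" "\<pi>!Suc i < L" using i st nth_mem by (metis Suc_lessD atLeastLessThan_iff)+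
    ultimately show "lex_less (shift (\<pi> ! i) \<omega>) (shift (\<pi> ! Suc i) \<omega>)" using h by blast
  qed
qed



definition e :: "nat list \<Rightarrow> nat \<Rightarrow> nat" where "e hs j = sum_list (take j hs)"
definition sidx :: "nat list \<Rightarrow> nat \<Rightarrow> nat" where
  "sidx hs x = (GREATEST j. j \<le> length hs \<and> e hs j \<le> x)"
definition kap :: "nat list \<Rightarrow> nat \<Rightarrow> int" where
  "kap hs x = (if even (sidx hs x) then - int x else int x)"

lemma sorted_wrt_concat_I:
  assumes "\<forall>xs\<in>set xss. sorted_wrt R xs"
    and "sorted_wrt (\<lambda>xs ys. \<forall>x\<in>set xs. \<forall>y\<in>set ys. R x y) xss"
  shows "sorted_wrt R (concat xss)"
  using assms
proof (induction xss)
  case Nil then show ?case by simp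
next
  case (Cons xs xss)
  have 1: "sorted_wrt R xs" using Cons.prems(1) by simp
  have 2: "sorted_wrt R (concat xss)" using Cons by simp
  have 3: "\<forall>x\<in>set xs. \<forall>y\<in>set (concat xss). R x y" using Cons.prems(2) by auto
  show ?case using 1 2 3 by (simp add: sorted_wrt_append)
qed

locale sp = fixes hs :: "nat list" assumes pos: "\<forall>h\<in>set hs. 1 \<le> h"
begin

lemma e_0[simp]: "e hs 0 = 0" by (simp add: e_def)

lemma e_Suc: "j < length hs \<Longrightarrow> e hs (Suc j) = e hs j + hs!j"
  by (simp add: e_def take_Suc_conv_app_nth)

lemma e_len: "length hs \<le> j \<Longrightarrow> e hs j = sum_list hs" by (simp add: e_def)

lemma e_Suc_le: "e hs j \<le> e hs (Suc j)"
  by (cases "j < length hs") (auto simp: e_Suc e_len)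

lemma e_mono: "j \<le> k \<Longrightarrow> e hs j \<le> e hs k"
proof (induction k)
  case 0 then show ?case by simp
next
  case (Suc k)
  show ?case
  proof (cases "j = Suc k")
    case True then show ?thesis by simp
  next
    case False
    then have "j \<le> k" using Suc.prems by simp
    then have "e hs j \<le> e hs k" by (rule Suc.IH)
    then show ?thesis using e_Suc_le[of k] by linarith
  qed
qed

lemma hs_pos: "j < length hs \<Longrightarrow> 1 \<le> hs!j" using pos by simp

lemma e_Suc_gt: "j < length hs \<Longrightarrow> e hs j < e hs (Suc j)"
  using e_Suc hs_pos by fastforce

lemma e_strict: assumes "j < k" "k \<le> length hs" shows "e hs j < e hs k"
proof -
  have "e hs j < e hs (Suc j)" using assms e_Suc_gt by simp
  also have "\<dots> \<le> e hs k" using assms e_mono by simp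
  finally show ?thesis .
qed

lemma sidx_ex: "sidx hs x \<le> length hs \<and> e hs (sidx hs x) \<le> x"
  unfolding sidx_def by (rule GreatestI_nat[of _ 0 "length hs"]) auto

lemma sidx_le: "sidx hs x \<le> length hs" using sidx_ex by blast
lemma e_sidx: "e hs (sidx hs x) \<le> x" using sidx_ex by blast

lemma sidx_ge: "j \<le> length hs \<Longrightarrow> e hs j \<le> x \<Longrightarrow> j \<le> sidx hs x"
  unfolding sidx_def by (rule Greatest_le_nat[of _ j "length hs"]) auto

lemma sidx_iff: "j \<le> length hs \<Longrightarrow> (e hs j \<le> x \<longleftrightarrow> j \<le> sidx hs x)"
  using sidx_ge e_sidx e_mono le_trans by blast

lemma sidx_lt: "x < sum_list hs \<Longrightarrow> sidx hs x < length hs"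
  using sidx_le e_sidx e_len by (metis le_neq_implies_less not_le order_refl)

lemma sidx_upper: "x < sum_list hs \<Longrightarrow> x < e hs (Suc (sidx hs x))"
proof -
  assume x: "x < sum_list hs"
  have "Suc (sidx hs x) \<le> length hs" using sidx_lt[OF x] by simp
  then show ?thesis using sidx_iff[of "Suc (sidx hs x)" x] by auto
qed

lemma sidx_big: assumes "sum_list hs \<le> x" shows "sidx hs x = length hs"
proof -
  have "length hs \<le> sidx hs x" by (rule sidx_ge) (auto simp: e_len assms)
  then show ?thesis using sidx_le[of x] by simp
qed

lemma sidx_of: "j < length hs \<Longrightarrow> e hs j \<le> x \<Longrightarrow> x < e hs (Suc j) \<Longrightarrow> sidx hs x = j"
  using sidx_iff[of j x] sidx_iff[of "Suc j" x] by simp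

lemma sidx_mono: "x \<le> y \<Longrightarrow> sidx hs x \<le> sidx hs y"
  using sidx_ge[OF sidx_le] e_sidx le_trans by blast

lemma sidx_Suc: "sidx hs (Suc x) \<le> Suc (sidx hs x)"
proof (rule ccontr)
  assume a: "\<not> ?thesis"
  then have le: "Suc (Suc (sidx hs x)) \<le> length hs" using sidx_le[of "Suc x"] by simp
  have "e hs (Suc (Suc (sidx hs x))) \<le> Suc x" using sidx_iff[OF le] a by simp
  moreover have "x < e hs (Suc (sidx hs x))" using sidx_iff[of "Suc (sidx hs x)" x] le by simp
  moreover have "e hs (Suc (sidx hs x)) < e hs (Suc (Suc (sidx hs x)))" using e_Suc_gt le by simp
  ultimately show False by linarith
qed

lemma sidx_lt_imp: "sidx hs x < sidx hs y \<Longrightarrow> x < y"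
  using sidx_mono not_le by blast

lemma e_le_len: "e hs j \<le> sum_list hs" using e_mono[of j "length hs"] e_len
  by (cases "j \<le> length hs") auto

lemma kap_cases: "kap hs x = - int x \<or> kap hs x = int x" by (simp add: kap_def)
lemma kap_le: "kap hs x \<le> int x" by (simp add: kap_def)
lemma kap_ge: "- int x \<le> kap hs x" by (simp add: kap_def)

lemma seg_eq: "j < length hs \<Longrightarrow> seg hs j = [e hs j..<e hs (Suc j)]"
  unfolding seg_def using e_Suc[of j] by (simp add: e_def)

lemma set_seg: "j < length hs \<Longrightarrow> set (seg hs j) = {e hs j..<e hs (Suc j)}"
  by (simp add: seg_eq)

lemma in_seg_sidx: "j < length hs \<Longrightarrow> x \<in> set (seg hs j) \<Longrightarrow> sidx hs x = j"
  using set_seg sidx_of by auto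

lemma set_spiral_aux: "(\<Union>j\<in>{j. j < length hs}. set (seg hs j)) = {0..<sum_list hs}"
proof (intro equalityI subsetI)
  fix x assume "x \<in> (\<Union>j\<in>{j. j < length hs}. set (seg hs j))"
  then obtain j where "j < length hs" "x \<in> set (seg hs j)" by blast
  then have "x < e hs (Suc j)" using set_seg by auto
  then show "x \<in> {0..<sum_list hs}" using e_le_len[of "Suc j"] by simp
next
  fix x assume "x \<in> {0..<sum_list hs}"
  then have x: "x < sum_list hs" by simp
  then have "x \<in> set (seg hs (sidx hs x))" using set_seg sidx_lt e_sidx sidx_upper by auto
  then show "x \<in> (\<Union>j\<in>{j. j < length hs}. set (seg hs j))" using sidx_lt[OF x] by blast
qed

lemma set_spiral: "set (spiral hs) = {0..<sum_list hs}"
proof -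
  have "set (spiral hs) = (\<Union>j\<in>{j. j < length hs \<and> even j}. set (seg hs j)) \<union>
                          (\<Union>j\<in>{j. j < length hs \<and> odd j}. set (seg hs j))"
    unfolding spiral_def by auto
  also have "\<dots> = (\<Union>j\<in>{j. j < length hs}. set (seg hs j))" by blast
  finally show ?thesis using set_spiral_aux by simp
qed

lemma kap_even: "j < length hs \<Longrightarrow> even j \<Longrightarrow> x \<in> set (seg hs j) \<Longrightarrow> kap hs x = - int x"
  using in_seg_sidx kap_def by simp
lemma kap_odd: "j < length hs \<Longrightarrow> odd j \<Longrightarrow> x \<in> set (seg hs j) \<Longrightarrow> kap hs x = int x"
  using in_seg_sidx kap_def by simp

lemma sorted_spiral: "sorted_wrt (\<lambda>a b. kap hs a < kap hs b) (spiral hs)"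
proof -
  let ?R = "\<lambda>a b. kap hs a < kap hs b"
  let ?ev = "filter even [0..<length hs]" and ?od = "filter odd [0..<length hs]"
  have sev: "sorted_wrt (<) ?ev" by (rule sorted_wrt_filter) simp
  have sod: "sorted_wrt (<) ?od" by (rule sorted_wrt_filter) simp
  have A: "sorted_wrt ?R (concat (map (\<lambda>j. rev (seg hs j)) (rev ?ev)))"
  proof (rule sorted_wrt_concat_I)
    show "\<forall>xs\<in>set (map (\<lambda>j. rev (seg hs j)) (rev ?ev)). sorted_wrt ?R xs"
    proof
      fix xs assume "xs \<in> set (map (\<lambda>j. rev (seg hs j)) (rev ?ev))"
      then obtain j where j: "j < length hs" "even j" "xs = rev (seg hs j)" by auto
      have "sorted_wrt ?R (rev [e hs j..<e hs (Suc j)])"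
        unfolding sorted_wrt_rev
      proof (rule sorted_wrt_mono_rel[OF _ sorted_wrt_upt])
        fix x y assume "x \<in> set [e hs j..<e hs (Suc j)]" "y \<in> set [e hs j..<e hs (Suc j)]" "x < y"
        then show "?R y x" using kap_even[OF j(1,2)] set_seg[OF j(1)] by auto
      qed
      then show "sorted_wrt ?R xs" using j seg_eq by simp
    qed
    show "sorted_wrt (\<lambda>xs ys. \<forall>x\<in>set xs. \<forall>y\<in>set ys. ?R x y) (map (\<lambda>j. rev (seg hs j)) (rev ?ev))"
      unfolding sorted_wrt_map sorted_wrt_rev
    proof (rule sorted_wrt_mono_rel[OF _ sev])
      fix i j assume ij: "i \<in> set ?ev" "j \<in> set ?ev" "i < j"
      show "\<forall>x\<in>set (rev (seg hs j)). \<forall>y\<in>set (rev (seg hs i)). ?R x y"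
      proof (intro ballI)
        fix x y assume x: "x \<in> set (rev (seg hs j))" and y: "y \<in> set (rev (seg hs i))"
        have "y < e hs (Suc i)" using y ij set_seg by auto
        moreover have "e hs (Suc i) \<le> e hs j" using ij e_mono by simp
        moreover have "e hs j \<le> x" using x ij set_seg by auto
        ultimately show "?R x y" using kap_even[of j x] kap_even[of i y] x y ij by auto
      qed
    qed
  qed
  have B: "sorted_wrt ?R (concat (map (seg hs) ?od))"
  proof (rule sorted_wrt_concat_I)
    show "\<forall>xs\<in>set (map (seg hs) ?od). sorted_wrt ?R xs"
    proof
      fix xs assume "xs \<in> set (map (seg hs) ?od)"
      then obtain j where j: "j < length hs" "odd j" "xs = seg hs j" by auto
      have "sorted_wrt ?R [e hs j..<e hs (Suc j)]"
      proof (rule sorted_wrt_mono_rel[OF _ sorted_wrt_upt])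
        fix x y assume "x \<in> set [e hs j..<e hs (Suc j)]" "y \<in> set [e hs j..<e hs (Suc j)]" "x < y"
        then show "?R x y" using kap_odd[OF j(1,2)] set_seg[OF j(1)] by auto
      qed
      then show "sorted_wrt ?R xs" using j seg_eq by simp
    qed
    show "sorted_wrt (\<lambda>xs ys. \<forall>x\<in>set xs. \<forall>y\<in>set ys. ?R x y) (map (seg hs) ?od)"
      unfolding sorted_wrt_map
    proof (rule sorted_wrt_mono_rel[OF _ sod])
      fix i j assume ij: "i \<in> set ?od" "j \<in> set ?od" "i < j"
      show "\<forall>x\<in>set (seg hs i). \<forall>y\<in>set (seg hs j). ?R x y"
      proof (intro ballI)
        fix x y assume x: "x \<in> set (seg hs i)" and y: "y \<in> set (seg hs j)"
        have "x < e hs (Suc i)" using x ij set_seg by auto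
        moreover have "e hs (Suc i) \<le> e hs j" using ij e_mono by simp
        moreover have "e hs j \<le> y" using y ij set_seg by auto
        ultimately show "?R x y" using kap_odd[of j y] kap_odd[of i x] x y ij by auto
      qed
    qed
  qed
  have C: "\<forall>x\<in>set (concat (map (\<lambda>j. rev (seg hs j)) (rev ?ev))).
           \<forall>y\<in>set (concat (map (seg hs) ?od)). ?R x y"
  proof (intro ballI)
    fix x y assume x: "x \<in> set (concat (map (\<lambda>j. rev (seg hs j)) (rev ?ev)))"
       and y: "y \<in> set (concat (map (seg hs) ?od))"
    obtain i where i: "i < length hs" "even i" "x \<in> set (seg hs i)" using x by auto
    obtain j where j: "j < length hs" "odd j" "y \<in> set (seg hs j)" using y by auto
    have "e hs 1 \<le> e hs j" using j e_mono by (cases j) auto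
    moreover have "0 < e hs 1" using e_Suc_gt[of 0] j by (cases hs) auto
    moreover have "e hs j \<le> y" using j set_seg by auto
    ultimately show "?R x y" using kap_even[OF i] kap_odd[OF j] by simp
  qed
  show ?thesis unfolding spiral_def sorted_wrt_append using A B C by blast
qed

end


context sp begin

definition R :: "(nat \<Rightarrow> nat) \<Rightarrow> bool" where
  "R \<omega> \<longleftrightarrow> (\<forall>p q. p < sum_list hs \<longrightarrow> q < sum_list hs \<longrightarrow> kap hs p < kap hs q \<longrightarrow>
      lex_less (shift p \<omega>) (shift q \<omega>))"

lemma R_lt: "R \<omega> \<Longrightarrow> p < sum_list hs \<Longrightarrow> q < sum_list hs \<Longrightarrow> kap hs p < kap hs q \<Longrightarrow>
      lex_less (shift p \<omega>) (shift q \<omega>)" unfolding R_def by blast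

lemma R_mono: "R \<omega> \<Longrightarrow> p < sum_list hs \<Longrightarrow> q < sum_list hs \<Longrightarrow> kap hs p < kap hs q \<Longrightarrow> \<omega> p \<le> \<omega> q"
  using R_lt lex_shift_first by blast

lemma R_forced: assumes "R \<omega>" "p < sum_list hs" "q < sum_list hs" "Suc p < sum_list hs" "Suc q < sum_list hs"
   "kap hs p < kap hs q" "kap hs (Suc q) < kap hs (Suc p)"
 shows "\<omega> p < \<omega> q"
proof -
  have l1: "lex_less (shift p \<omega>) (shift q \<omega>)" using R_lt assms by blast
  have l2: "lex_less (shift (Suc q) \<omega>) (shift (Suc p) \<omega>)" using R_lt assms by blast
  have "\<omega> p \<le> \<omega> q" using l1 lex_shift_first by blast
  moreover have "\<omega> p \<noteq> \<omega> q"
  proof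
    assume "\<omega> p = \<omega> q"
    then have "lex_less (shift (Suc p) \<omega>) (shift (Suc q) \<omega>)" using lex_shift_eq l1 by blast
    then show False using l2 lex_asym by blast
  qed
  ultimately show ?thesis by simp
qed

lemma kap_sidx_even: "even (sidx hs x) \<Longrightarrow> kap hs x = - int x" by (simp add: kap_def)
lemma kap_sidx_odd: "odd (sidx hs x) \<Longrightarrow> kap hs x = int x" by (simp add: kap_def)

definition T :: "nat \<Rightarrow> nat" where "T m = e hs m - 1"
definition Oo :: "nat \<Rightarrow> nat" where "Oo m = (if m = 1 then 0 else e hs (m - 1) - 1)"

lemma e_pos: "0 < m \<Longrightarrow> m \<le> length hs \<Longrightarrow> 0 < e hs m"
  using e_strict[of 0 m] by simp

lemma Oo_lt: assumes "1 \<le> m" "m \<le> length hs" shows "Oo m < e hs m"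
proof (cases "m = 1")
  case True then show ?thesis using e_pos assms by (simp add: Oo_def)
next
  case False
  then have "e hs (m - 1) < e hs m" using e_strict[of "m - 1" m] assms by simp
  then show ?thesis using False by (simp add: Oo_def)
qed

lemma sidx_T: assumes "1 \<le> m" "m \<le> length hs" shows "sidx hs (T m) = m - 1"
proof -
  have "e hs (m - 1) < e hs m" using e_strict[of "m - 1" m] assms by simp
  then show ?thesis using sidx_of[of "m - 1" "T m"] assms by (simp add: T_def)
qed

lemma sidx_e: assumes "m < length hs" shows "sidx hs (e hs m) = m"
  using sidx_of[of m "e hs m"] e_Suc_gt[of m] assms by simp

lemma e_lt_L: "m < length hs \<Longrightarrow> e hs m < sum_list hs"
  using e_strict[of m "length hs"] e_len[of "length hs"] by simp

lemma F:
  assumes h0: "2 \<le> hs ! 0" and r: "R \<omega>"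
  shows "1 \<le> m \<Longrightarrow> m < length hs \<Longrightarrow>
    (odd m \<longrightarrow> \<omega> (T m) + m \<le> \<omega> (Oo m)) \<and> (even m \<longrightarrow> \<omega> (Oo m) + m \<le> \<omega> (T m))"
proof (induction m rule: nat_induct_at_least)
  case base
  let ?L = "sum_list hs"
  have hs1: "1 < length hs" using base by simp
  have e1: "e hs 1 = hs ! 0" using hs1 by (cases hs) (auto simp: e_def)
  define t where "t = T 1"
  have t: "t = hs ! 0 - 1" using e1 by (simp add: t_def T_def)
  have tL: "Suc t < ?L" using e_lt_L[OF hs1] e1 t h0 by simp
  have st: "sidx hs t = 0" using sidx_T[of 1] hs1 t_def by simp
  have su: "sidx hs (t - 1) = 0" using sidx_mono[of "t - 1" t] st by simp
  have s1: "sidx hs (Suc t) = 1" using sidx_e[OF hs1] e1 t h0 by simp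
  have kt: "kap hs t = - int t" using st kap_sidx_even by simp
  have ku: "kap hs (t - 1) = - int (t - 1)" using su kap_sidx_even by simp
  have ks: "kap hs (Suc t) = int (Suc t)" using s1 kap_sidx_odd by simp
  have t1: "1 \<le> t" using t h0 by simp
  have "\<omega> t < \<omega> (t - 1)"
    by (rule R_forced[OF r]) (use tL t1 kt ku ks in auto)
  moreover have "\<omega> (t - 1) \<le> \<omega> 0"
  proof (cases "t = 1")
    case True then show ?thesis by simp
  next
    case False
    have k0: "kap hs 0 = 0" by (simp add: kap_def)
    show ?thesis by (rule R_mono[OF r]) (use tL t1 False ku k0 in auto)
  qed
  ultimately show ?case by (simp add: t_def Oo_def)
next
  case (Suc m)
  let ?L = "sum_list hs"
  have m1: "1 \<le> m" and mD: "Suc m < length hs" using Suc by auto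
  have IH: "(odd m \<longrightarrow> \<omega> (T m) + m \<le> \<omega> (Oo m)) \<and> (even m \<longrightarrow> \<omega> (Oo m) + m \<le> \<omega> (T m))"
    using Suc.IH mD by simp
  have OS: "Oo (Suc m) = T m" using m1 by (simp add: Oo_def T_def)
  define t where "t = T (Suc m)"
  have em: "e hs m < e hs (Suc m)" using e_Suc_gt[of m] mD by simp
  have t_def': "t = e hs (Suc m) - 1" by (simp add: t_def T_def)
  have st: "sidx hs t = m" using sidx_T[of "Suc m"] mD t_def by simp
  have tS: "Suc t = e hs (Suc m)" using em t_def' by simp
  have sS: "sidx hs (Suc t) = Suc m" using tS sidx_e[OF mD] by simp
  have tL: "Suc t < ?L" using tS e_lt_L[OF mD] by simp
  have Om: "Oo m < e hs m" using Oo_lt[of m] m1 mD by simp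
  have OL: "Suc (Oo m) < ?L" using Om em tL tS by simp
  have emt: "e hs m \<le> t" using em t_def' by simp
  show ?case
  proof (cases "even m")
    case ev: True
    have kt: "kap hs t = - int t" using st ev kap_sidx_even by simp
    have kS: "kap hs (Suc t) = int (Suc t)" using sS ev kap_sidx_odd by simp
    have kO: "- int (Oo m) \<le> kap hs (Oo m)" by (rule kap_ge)
    have IH': "\<omega> (Oo m) + m \<le> \<omega> (T m)" using IH ev by simp
    have step: "\<omega> t < \<omega> (Oo m)"
    proof (cases "e hs m < t")
      case True
      have su: "sidx hs (t - 1) = m" using sidx_mono[of "t - 1" t] sidx_ge[of m "t - 1"] True st mD by simp
      have ku: "kap hs (t - 1) = - int (t - 1)" using su ev kap_sidx_even by simp
      have a: "\<omega> t < \<omega> (t - 1)"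
        by (rule R_forced[OF r]) (use tL True kt ku kS in auto)
      have b: "\<omega> (t - 1) \<le> \<omega> (Oo m)"
        by (rule R_mono[OF r]) (use tL True ku kO Om OL in auto)
      show ?thesis using a b by simp
    next
      case False
      then have tm: "t = e hs m" using emt by simp
      have kO1: "kap hs (Suc (Oo m)) \<le> int (Suc (Oo m))" by (rule kap_le)
      show ?thesis
        by (rule R_forced[OF r]) (use tL tm kt kO kS kO1 Om OL in auto)
    qed
    show ?thesis using IH' step ev OS t_def by simp
  next
    case od: False
    have kt: "kap hs t = int t" using st od kap_sidx_odd by simp
    have kS: "kap hs (Suc t) = - int (Suc t)" using sS od kap_sidx_even by simp
    have kO: "kap hs (Oo m) \<le> int (Oo m)" by (rule kap_le)
    have IH': "\<omega> (T m) + m \<le> \<omega> (Oo m)" using IH od by simp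
    have step: "\<omega> (Oo m) < \<omega> t"
    proof (cases "e hs m < t")
      case True
      have su: "sidx hs (t - 1) = m" using sidx_mono[of "t - 1" t] sidx_ge[of m "t - 1"] True st mD by simp
      have ku: "kap hs (t - 1) = int (t - 1)" using su od kap_sidx_odd by simp
      have a: "\<omega> (t - 1) < \<omega> t"
        by (rule R_forced[OF r]) (use tL True kt ku kS in auto)
      have b: "\<omega> (Oo m) \<le> \<omega> (t - 1)"
        by (rule R_mono[OF r]) (use tL True ku kO Om OL in auto)
      show ?thesis using a b by simp
    next
      case False
      then have tm: "t = e hs m" using emt by simp
      have kO1: "- int (Suc (Oo m)) \<le> kap hs (Suc (Oo m))" by (rule kap_ge)
      show ?thesis
        by (rule R_forced[OF r]) (use tL tm kt kO kS kO1 Om OL in auto)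
    qed
    show ?thesis using IH' step od OS t_def by simp
  qed
qed

end


context sp begin

definition lastp :: "nat \<Rightarrow> bool" where "lastp x \<longleftrightarrow> sidx hs (Suc x) \<noteq> sidx hs x"

lemma lp_Suc: "lastp x \<Longrightarrow> sidx hs (Suc x) = Suc (sidx hs x)"
  using sidx_Suc[of x] sidx_mono[of x "Suc x"] unfolding lastp_def by simp
lemma nlp_Suc: "\<not> lastp x \<Longrightarrow> sidx hs (Suc x) = sidx hs x"
  unfolding lastp_def by simp
lemma lt_L_of_sidx: "sidx hs y < length hs \<Longrightarrow> y < sum_list hs"
  using sidx_big by (metis leI less_irrefl)
lemma pos_of_sidx: assumes "1 \<le> sidx hs x" "1 \<le> length hs" shows "0 < x"
proof -
  have "e hs 1 \<le> x" using sidx_iff[of 1 x] assms by simp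
  moreover have "0 < e hs 1" using e_pos[of 1] assms by simp
  ultimately show ?thesis by simp
qed

definition g :: "int \<Rightarrow> (nat \<Rightarrow> bool) \<Rightarrow> nat \<Rightarrow> int" where
  "g a l x = (if even (sidx hs x) then a - int (sidx hs x div 2) - (if l x then 1 else 0)
              else a + int (sidx hs x div 2) + (if l x then 1 else 0))"

lemma g_mono:
  assumes H1: "\<And>x. x < sum_list hs \<Longrightarrow> l x \<Longrightarrow> lastp x"
    and p: "p < sum_list hs" and q: "q < sum_list hs" and pq: "kap hs p < kap hs q"
  shows "g a l p \<le> g a l q \<and>
    (g a l p = g a l q \<longrightarrow> (\<forall>x. x < sum_list hs \<longrightarrow> Suc x \<noteq> sum_list hs \<longrightarrow> lastp x \<longrightarrow> l x) \<longrightarrow>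
       Suc p \<noteq> sum_list hs \<longrightarrow> Suc q \<noteq> sum_list hs \<longrightarrow>
       Suc p < sum_list hs \<and> Suc q < sum_list hs \<and> kap hs (Suc p) < kap hs (Suc q))"
proof -
  let ?L = "sum_list hs" and ?D = "length hs"
  define j where "j = sidx hs p"
  define k where "k = sidx hs q"
  have jD: "j < ?D" using sidx_lt[OF p] j_def by simp
  have kD: "k < ?D" using sidx_lt[OF q] k_def by simp
  have D1: "1 \<le> ?D" using jD by simp
  have gp: "g a l p = (if even j then a - int (j div 2) - (if l p then 1 else 0)
              else a + int (j div 2) + (if l p then 1 else 0))" by (simp add: g_def j_def)
  have gq: "g a l q = (if even k then a - int (k div 2) - (if l q then 1 else 0)
              else a + int (k div 2) + (if l q then 1 else 0))" by (simp add: g_def k_def)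
  show ?thesis
  proof (cases "even j")
    case ej: True
    have kp: "kap hs p = - int p" using ej j_def kap_sidx_even by simp
    show ?thesis
    proof (cases "even k")
      case ek: True
      have kq: "kap hs q = - int q" using ek k_def kap_sidx_even by simp
      have qp: "q < p" using pq kp kq by simp
      have kj: "k \<le> j" using sidx_mono[of q p] qp j_def k_def by simp
      show ?thesis
      proof (cases "k = j")
        case True
        have nlq: "\<not> lastp q"
        proof
          assume "lastp q"
          then have "sidx hs (Suc q) = Suc k" using lp_Suc k_def by simp
          moreover have "sidx hs (Suc q) \<le> j" using sidx_mono[of "Suc q" p] qp j_def by simp
          ultimately show False using True by simp
        qed
        have nlq': "\<not> l q" using nlq H1 q by blast
        have le: "g a l p \<le> g a l q" using gp gq True ej nlq' by simp
        show ?thesis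
        proof (intro conjI impI le)
          assume eq: "g a l p = g a l q" and H2: "\<forall>x. x < ?L \<longrightarrow> Suc x \<noteq> ?L \<longrightarrow> lastp x \<longrightarrow> l x"
            and sp: "Suc p \<noteq> ?L" and sq: "Suc q \<noteq> ?L"
          have "\<not> l p" using eq gp gq True ej nlq' by (simp split: if_splits)
          then have nlp: "\<not> lastp p" using H2 p sp by blast
          have s1: "sidx hs (Suc p) = j" using nlp_Suc[OF nlp] j_def by simp
          have s2: "sidx hs (Suc q) = k" using nlp_Suc[OF nlq] k_def by simp
          show "Suc p < ?L" using s1 jD lt_L_of_sidx by simp
          show "Suc q < ?L" using s2 kD lt_L_of_sidx by simp
          show "kap hs (Suc p) < kap hs (Suc q)"
            using s1 s2 ej ek kap_sidx_even[of "Suc p"] kap_sidx_even[of "Suc q"] qp by simp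
        qed
      next
        case False
        then have kj2: "k + 2 \<le> j" using kj ej ek by presburger
        have dd: "int (k div 2) + 1 \<le> int (j div 2)" using kj2 ej ek by presburger
        have le: "g a l p \<le> g a l q" using gp gq ej ek dd by (simp split: if_splits)
        show ?thesis
        proof (intro conjI impI le)
          assume eq: "g a l p = g a l q" and H2: "\<forall>x. x < ?L \<longrightarrow> Suc x \<noteq> ?L \<longrightarrow> lastp x \<longrightarrow> l x"
            and sp: "Suc p \<noteq> ?L" and sq: "Suc q \<noteq> ?L"
          have "\<not> l p" "l q" using eq gp gq ej ek dd by (simp_all split: if_splits)
          then have nlp: "\<not> lastp p" and lq: "lastp q" using H2 H1 p q sp by blast+
          have s1: "sidx hs (Suc p) = j" using nlp_Suc[OF nlp] j_def by simp
          have s2: "sidx hs (Suc q) = Suc k" using lp_Suc[OF lq] k_def by simp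
          show "Suc p < ?L" using s1 jD lt_L_of_sidx by simp
          show "Suc q < ?L" using s2 kj2 jD lt_L_of_sidx by simp
          show "kap hs (Suc p) < kap hs (Suc q)"
            using s1 s2 ej ek kap_sidx_even[of "Suc p"] kap_sidx_odd[of "Suc q"] by simp
        qed
      qed
    next
      case ok: False
      have le: "g a l p \<le> g a l q" using gp gq ej ok by (simp split: if_splits)
      show ?thesis
      proof (intro conjI impI le)
        assume eq: "g a l p = g a l q" and H2: "\<forall>x. x < ?L \<longrightarrow> Suc x \<noteq> ?L \<longrightarrow> lastp x \<longrightarrow> l x"
          and sp: "Suc p \<noteq> ?L" and sq: "Suc q \<noteq> ?L"
        have "\<not> l p" "\<not> l q" "j div 2 = 0" "k div 2 = 0" using eq gp gq ej ok by (simp_all split: if_splits)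
        then have nlp: "\<not> lastp p" and nlq: "\<not> lastp q" using H2 p q sp sq by blast+
        have s1: "sidx hs (Suc p) = j" using nlp_Suc[OF nlp] j_def by simp
        have s2: "sidx hs (Suc q) = k" using nlp_Suc[OF nlq] k_def by simp
        show "Suc p < ?L" using s1 jD lt_L_of_sidx by simp
        show "Suc q < ?L" using s2 kD lt_L_of_sidx by simp
        show "kap hs (Suc p) < kap hs (Suc q)"
          using s1 s2 ej ok kap_sidx_even[of "Suc p"] kap_sidx_odd[of "Suc q"] by simp
      qed
    qed
  next
    case oj: False
    have kp: "kap hs p = int p" using oj j_def kap_sidx_odd by simp
    have p0: "0 < p" using pos_of_sidx[of p] oj j_def D1 by (cases j) auto
    show ?thesis
    proof (cases "even k")
      case ek: True
      have kq: "kap hs q = - int q" using ek k_def kap_sidx_even by simp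
      then have False using pq kp p0 by simp
      then show ?thesis ..
    next
      case ok: False
      have kq: "kap hs q = int q" using ok k_def kap_sidx_odd by simp
      have pq': "p < q" using pq kp kq by simp
      have jk: "j \<le> k" using sidx_mono[of p q] pq' j_def k_def by simp
      show ?thesis
      proof (cases "k = j")
        case True
        have nlp: "\<not> lastp p"
        proof
          assume "lastp p"
          then have "sidx hs (Suc p) = Suc j" using lp_Suc j_def by simp
          moreover have "sidx hs (Suc p) \<le> k" using sidx_mono[of "Suc p" q] pq' k_def by simp
          ultimately show False using True by simp
        qed
        have nlp': "\<not> l p" using nlp H1 p by blast
        have le: "g a l p \<le> g a l q" using gp gq True oj nlp' by simp
        show ?thesis
        proof (intro conjI impI le)
          assume eq: "g a l p = g a l q" and H2: "\<forall>x. x < ?L \<longrightarrow> Suc x \<noteq> ?L \<longrightarrow> lastp x \<longrightarrow> l x"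
            and sp: "Suc p \<noteq> ?L" and sq: "Suc q \<noteq> ?L"
          have "\<not> l q" using eq gp gq True oj nlp' by (simp split: if_splits)
          then have nlq: "\<not> lastp q" using H2 q sq by blast
          have s1: "sidx hs (Suc p) = j" using nlp_Suc[OF nlp] j_def by simp
          have s2: "sidx hs (Suc q) = k" using nlp_Suc[OF nlq] k_def by simp
          show "Suc p < ?L" using s1 jD lt_L_of_sidx by simp
          show "Suc q < ?L" using s2 kD lt_L_of_sidx by simp
          show "kap hs (Suc p) < kap hs (Suc q)"
            using s1 s2 oj ok kap_sidx_odd[of "Suc p"] kap_sidx_odd[of "Suc q"] pq' by simp
        qed
      next
        case False
        then have jk2: "j + 2 \<le> k" using jk oj ok by presburger
        have dd: "int (j div 2) + 1 \<le> int (k div 2)" using jk2 oj ok by presburger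
        have le: "g a l p \<le> g a l q" using gp gq oj ok dd by (simp split: if_splits)
        show ?thesis
        proof (intro conjI impI le)
          assume eq: "g a l p = g a l q" and H2: "\<forall>x. x < ?L \<longrightarrow> Suc x \<noteq> ?L \<longrightarrow> lastp x \<longrightarrow> l x"
            and sp: "Suc p \<noteq> ?L" and sq: "Suc q \<noteq> ?L"
          have "l p" "\<not> l q" using eq gp gq oj ok dd by (simp_all split: if_splits)
          then have lp: "lastp p" and nlq: "\<not> lastp q" using H2 H1 p q sq by blast+
          have s1: "sidx hs (Suc p) = Suc j" using lp_Suc[OF lp] j_def by simp
          have s2: "sidx hs (Suc q) = k" using nlp_Suc[OF nlq] k_def by simp
          show "Suc p < ?L" using s1 jk2 kD lt_L_of_sidx by simp
          show "Suc q < ?L" using s2 kD lt_L_of_sidx by simp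
          show "kap hs (Suc p) < kap hs (Suc q)"
            using s1 s2 oj ok kap_sidx_even[of "Suc p"] kap_sidx_odd[of "Suc q"] by simp
        qed
      qed
    qed
  qed
qed

end


context sp begin

lemma G:
  assumes H: "\<And>p q. p < sum_list hs \<Longrightarrow> q < sum_list hs \<Longrightarrow> kap hs p < kap hs q \<Longrightarrow>
     \<omega> p < \<omega> q \<or> (\<omega> p = \<omega> q \<and> ((Suc p < sum_list hs \<and> Suc q < sum_list hs \<and> kap hs (Suc p) < kap hs (Suc q))
        \<or> lex_less (shift (Suc p) \<omega>) (shift (Suc q) \<omega>)))"
  shows "R \<omega>"
proof -
  let ?L = "sum_list hs"
  have main: "\<forall>p q. ?L - p \<le> n \<longrightarrow> p < ?L \<longrightarrow> q < ?L \<longrightarrow> kap hs p < kap hs q \<longrightarrow>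
      lex_less (shift p \<omega>) (shift q \<omega>)" for n
  proof (induction n)
    case 0 then show ?case by auto
  next
    case (Suc n)
    show ?case
    proof (intro allI impI)
      fix p q assume a: "?L - p \<le> Suc n" "p < ?L" "q < ?L" "kap hs p < kap hs q"
      from H[OF a(2-4)] show "lex_less (shift p \<omega>) (shift q \<omega>)"
      proof (elim disjE conjE)
        assume "\<omega> p < \<omega> q" then show ?thesis using lex_shift by blast
      next
        assume eq: "\<omega> p = \<omega> q" and c: "Suc p < ?L" "Suc q < ?L" "kap hs (Suc p) < kap hs (Suc q)"
        have "?L - Suc p \<le> n" using a by simp
        then have "lex_less (shift (Suc p) \<omega>) (shift (Suc q) \<omega>)" using Suc.IH c by blast
        then show ?thesis using eq lex_shift by blast
      next
        assume eq: "\<omega> p = \<omega> q" and c: "lex_less (shift (Suc p) \<omega>) (shift (Suc q) \<omega>)"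
        then show ?thesis using eq lex_shift by blast
      qed
    qed
  qed
  show ?thesis unfolding R_def using main[of ?L] by auto
qed

lemma last_nth: "hs \<noteq> [] \<Longrightarrow> last hs = hs ! (length hs - 1)" by (simp add: last_conv_nth)

lemma forb:
  assumes h0: "2 \<le> hs ! 0" and D2: "2 \<le> length hs" and r: "R \<omega>" and b: "\<forall>n. \<omega> n < N"
  shows "length hs \<le> N \<and> (2 \<le> last hs \<longrightarrow> length hs + 1 \<le> N)"
proof -
  let ?L = "sum_list hs" and ?D = "length hs"
  define m where "m = ?D - 1"
  have m1: "1 \<le> m" "m < ?D" using D2 m_def by auto
  have Fm: "(odd m \<longrightarrow> \<omega> (T m) + m \<le> \<omega> (Oo m)) \<and> (even m \<longrightarrow> \<omega> (Oo m) + m \<le> \<omega> (T m))"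
    using F[OF h0 r m1] .
  have bT: "\<omega> (T m) < N" "\<omega> (Oo m) < N" using b by auto
  have mN: "m < N"
  proof (cases "even m")
    case True then have "\<omega> (Oo m) + m \<le> \<omega> (T m)" using Fm by blast
    then show ?thesis using bT by linarith
  next
    case False then have "\<omega> (T m) + m \<le> \<omega> (Oo m)" using Fm by blast
    then show ?thesis using bT by linarith
  qed
  have DN: "?D \<le> N" using mN m_def m1 by simp
  moreover have "?D + 1 \<le> N" if l2: "2 \<le> last hs"
  proof (rule ccontr)
    assume "\<not> ?thesis"
    then have ND: "N = ?D" using DN by simp
    have hsne: "hs \<noteq> []" using D2 by auto
    have lastm: "last hs = hs ! m" using last_nth[OF hsne] m_def by simp
    have eL: "e hs (Suc m) = ?L" using e_len[of "Suc m"] m_def m1 by simp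
    have eS: "e hs (Suc m) = e hs m + hs ! m" using e_Suc m1 by simp
    have x2: "e hs m + 2 \<le> ?L" using eL eS lastm l2 by simp
    define x where "x = ?L - 2"
    have sx: "sidx hs x = m" using sidx_of[of m x] m1 x2 eL x_def by simp
    have sx1: "sidx hs (Suc x) = m" using sidx_of[of m "Suc x"] m1 x2 eL x_def by simp
    have xL: "Suc x < ?L" using x2 x_def by simp
    have Om: "Oo m < e hs m" using Oo_lt m1 by simp
    show False
    proof (cases "even m")
      case False
      have NM: "N = Suc m" using ND m_def m1 by simp
      have "\<omega> (T m) + m \<le> \<omega> (Oo m)" using Fm False by blast
      then have "\<omega> (Oo m) = N - 1" using bT NM by linarith
      moreover have "\<omega> (Oo m) \<le> \<omega> x"
      proof (rule R_mono[OF r])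
        show "Oo m < ?L" "x < ?L" using Om x2 x_def by auto
        show "kap hs (Oo m) < kap hs x" using kap_le[of "Oo m"] kap_sidx_odd[of x] sx False Om x2 x_def by simp
      qed
      moreover have "\<omega> x < N" using b by blast
      moreover have aux: "\<And>a c::nat. a = N - 1 \<Longrightarrow> a \<le> c \<Longrightarrow> c < N \<Longrightarrow> c = N - 1" by linarith
      ultimately have "\<omega> x = N - 1" by blast
      moreover have "lex_less (shift x \<omega>) (shift (Suc x) \<omega>)"
        using R_lt[OF r, of x "Suc x"] xL kap_sidx_odd[of x] kap_sidx_odd[of "Suc x"] sx sx1 False by simp
      ultimately show False using noinc[OF b] by blast
    next
      case True
      have NM: "N = Suc m" using ND m_def m1 by simp
      have "\<omega> (Oo m) + m \<le> \<omega> (T m)" using Fm True by blast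
      then have "\<omega> (Oo m) = 0" using bT NM by linarith
      moreover have "\<omega> x \<le> \<omega> (Oo m)"
      proof (rule R_mono[OF r])
        show "Oo m < ?L" "x < ?L" using Om x2 x_def by auto
        show "kap hs x < kap hs (Oo m)" using kap_ge[of "Oo m"] kap_sidx_even[of x] sx True Om x2 x_def by simp
      qed
      ultimately have "\<omega> x = 0" by simp
      moreover have "lex_less (shift (Suc x) \<omega>) (shift x \<omega>)"
        using R_lt[OF r, of "Suc x" x] xL kap_sidx_even[of x] kap_sidx_even[of "Suc x"] sx sx1 True by simp
      ultimately show False using nodec by blast
    qed
  qed
  ultimately show ?thesis by blast
qed

end


context sp begin

lemma sidx_Lm1: assumes "1 \<le> length hs" shows "sidx hs (sum_list hs - 1) = length hs - 1"
proof -
  have "sidx hs (T (length hs)) = length hs - 1" using sidx_T[of "length hs"] assms by simp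
  moreover have "T (length hs) = sum_list hs - 1" using e_len[of "length hs"] by (simp add: T_def)
  ultimately show ?thesis by simp
qed

lemma L_pos: assumes "1 \<le> length hs" shows "0 < sum_list hs"
proof -
  have "hs \<noteq> []" using assms by (cases hs) auto
  then have "0 < e hs (length hs)" using e_pos[of "length hs"] by simp
  then show ?thesis using e_len[of "length hs"] by simp
qed

lemma lastp_Lm1: "1 \<le> length hs \<Longrightarrow> lastp (sum_list hs - 1)"
  unfolding lastp_def using sidx_Lm1 sidx_big[of "Suc (sum_list hs - 1)"] L_pos by simp

lemma lastp_top: assumes "lastp x" "sidx hs x = length hs - 1" "x < sum_list hs" shows "Suc x = sum_list hs"
proof -
  have D1: "1 \<le> length hs" using sidx_lt[OF assms(3)] by simp
  have "sidx hs (Suc x) = length hs" using lp_Suc[OF assms(1)] assms(2) D1 by simp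
  then have "e hs (length hs) \<le> Suc x" using e_sidx[of "Suc x"] by simp
  then show ?thesis using e_len[of "length hs"] assms(3) by simp
qed

lemma last_unique:
  assumes D1: "1 \<le> length hs" and p: "p < sum_list hs" "Suc p \<noteq> sum_list hs"
  shows "g a lastp p \<noteq> g a lastp (sum_list hs - 1)"
proof -
  define J where "J = length hs - 1"
  define k where "k = sidx hs p"
  have sJ: "sidx hs (sum_list hs - 1) = J" using sidx_Lm1 D1 J_def by simp
  have lJ: "lastp (sum_list hs - 1)" using lastp_Lm1 D1 by simp
  have kJ: "k \<le> J" using sidx_lt[OF p(1)] k_def J_def by simp
  have gL: "g a lastp (sum_list hs - 1) = (if even J then a - int (J div 2) - 1 else a + int (J div 2) + 1)"
    using sJ lJ by (simp add: g_def)
  have gp: "g a lastp p = (if even k then a - int (k div 2) - (if lastp p then 1 else 0)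
              else a + int (k div 2) + (if lastp p then 1 else 0))" by (simp add: g_def k_def)
  show ?thesis
  proof (cases "k = J")
    case True
    have "\<not> lastp p" using lastp_top[of p] p True k_def J_def by auto
    then show ?thesis using gp gL True by simp
  next
    case False
    then have kJ': "k < J" using kJ by simp
    show ?thesis
    proof (cases "even J")
      case True
      have "k div 2 < J div 2 \<or> odd k" using kJ' True by presburger
      then show ?thesis using gp gL True by (auto split: if_splits)
    next
      case False
      have "k div 2 < J div 2 \<or> even k" using kJ' False by presburger
      then show ?thesis using gp gL False by (auto split: if_splits)
    qed
  qed
qed

lemma allowA:
  assumes D2: "2 \<le> length hs" and N: "length hs + 1 \<le> N"
  shows "\<exists>\<omega>. (\<forall>n. \<omega> n < N) \<and> R \<omega>"
proof -
  let ?L = "sum_list hs" and ?D = "length hs"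
  define a where "a = int ((?D + 1) div 2)"
  define \<omega> where "\<omega> x = (if x < ?L then nat (g a lastp x) else 0)" for x
  have rng: "0 \<le> g a lastp x \<and> g a lastp x \<le> int ?D" if x: "x < ?L" for x
  proof -
    have "sidx hs x < ?D" using sidx_lt[OF x] .
    then show ?thesis unfolding g_def a_def by (cases "even (sidx hs x)") (auto, presburger+)
  qed
  have bnd: "\<forall>n. \<omega> n < N"
  proof
    fix n show "\<omega> n < N"
    proof (cases "n < ?L")
      case True
      have "g a lastp n < int N" using rng[OF True] N by linarith
      then show ?thesis using rng[OF True] True unfolding \<omega>_def by (simp add: nat_less_iff)
    next
      case False then show ?thesis using N unfolding \<omega>_def by simp
    qed
  qed
  have "R \<omega>"
  proof (rule G)
    fix p q assume p: "p < ?L" and q: "q < ?L" and pq: "kap hs p < kap hs q"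
    have M: "g a lastp p \<le> g a lastp q \<and>
      (g a lastp p = g a lastp q \<longrightarrow> (\<forall>x. x < ?L \<longrightarrow> Suc x \<noteq> ?L \<longrightarrow> lastp x \<longrightarrow> lastp x) \<longrightarrow>
       Suc p \<noteq> ?L \<longrightarrow> Suc q \<noteq> ?L \<longrightarrow>
       Suc p < ?L \<and> Suc q < ?L \<and> kap hs (Suc p) < kap hs (Suc q))"
      by (rule g_mono[OF _ p q pq]) simp
    have wp: "\<omega> p = nat (g a lastp p)" "\<omega> q = nat (g a lastp q)" using p q by (simp_all add: \<omega>_def)
    have r0: "0 \<le> g a lastp p" "0 \<le> g a lastp q" using rng p q by auto
    show "\<omega> p < \<omega> q \<or> (\<omega> p = \<omega> q \<and> ((Suc p < ?L \<and> Suc q < ?L \<and> kap hs (Suc p) < kap hs (Suc q))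
        \<or> lex_less (shift (Suc p) \<omega>) (shift (Suc q) \<omega>)))"
    proof (cases "g a lastp p < g a lastp q")
      case True then show ?thesis using wp r0 by simp
    next
      case False
      then have eq: "g a lastp p = g a lastp q" using M by simp
      have pq_ne: "p \<noteq> q" using pq by auto
      have D1: "1 \<le> ?D" using D2 by simp
      have sp: "Suc p \<noteq> ?L"
      proof
        assume "Suc p = ?L"
        then have pL: "p = ?L - 1" by simp
        then have "Suc q \<noteq> ?L" using q pq_ne by auto
        then show False using last_unique[OF D1 q, of a] eq pL by auto
      qed
      have sq: "Suc q \<noteq> ?L"
      proof
        assume "Suc q = ?L"
        then have "q = ?L - 1" by simp
        then show False using last_unique[OF D1 p, of a] eq pq_ne sp by auto
      qed
      show ?thesis using M eq sp sq wp by simp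
    qed
  qed
  then show ?thesis using bnd by blast
qed

end


lemma lex_const: assumes "\<forall>n. x n \<le> M" "x i < M" shows "lex_less x (\<lambda>_. M)"
proof -
  obtain n where n: "x n < M" "\<forall>m<n. \<not> x m < M" using assms(2) exists_least_iff[of "\<lambda>n. x n < M"] by blast
  have "\<forall>m<n. x m = M" using n(2) assms(1) by (meson antisym_conv2)
  then show ?thesis unfolding lex_less_def using n(1) by blast
qed

context sp begin

lemma allowB:
  assumes D2: "2 \<le> length hs" and N: "length hs \<le> N" and l1: "last hs = 1"
  shows "\<exists>\<omega>. (\<forall>n. \<omega> n < N) \<and> R \<omega>"
proof -
  let ?L = "sum_list hs" and ?D = "length hs"
  define J where "J = ?D - 1"
  define M where "M = ?D - 1"
  define l where "l x = (lastp x \<and> Suc x \<noteq> ?L)" for x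
  define a where "a = int (?D div 2)"
  define \<omega> where "\<omega> x = (if x < ?L then nat (g a l x) else if even J then 0 else M)" for x
  have D1: "1 \<le> ?D" using D2 by simp
  have J1: "1 \<le> J" "J < ?D" using D2 J_def by auto
  have hsne: "hs \<noteq> []" using D2 by auto
  have lastJ: "hs ! J = 1" using l1 last_nth[OF hsne] J_def by simp
  have eJ: "e hs J = ?L - 1"
  proof -
    have "e hs (Suc J) = e hs J + hs ! J" using e_Suc J1 by simp
    moreover have "e hs (Suc J) = ?L" using e_len J_def D1 by simp
    ultimately show ?thesis using lastJ by simp
  qed
  have Lpos: "0 < ?L" using L_pos D1 by simp
  have sL: "sidx hs (?L - 1) = J" using sidx_Lm1 D1 J_def by simp
  have nlL: "\<not> l (?L - 1)" using Lpos by (simp add: l_def)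
  have small: "sidx hs x < J" if "x < ?L - 1" for x
  proof (rule ccontr)
    assume "\<not> ?thesis"
    then have "e hs J \<le> x" using sidx_iff[of J x] J1 by simp
    then show False using that eJ by simp
  qed
  have gL: "g a l (?L - 1) = (if even J then a - int (J div 2) else a + int (J div 2))"
    using sL nlL by (simp add: g_def)
  have H1: "\<And>x. x < ?L \<Longrightarrow> l x \<Longrightarrow> lastp x" by (simp add: l_def)
  have rng: "0 \<le> g a l x \<and> g a l x \<le> int M" if x: "x < ?L" for x
  proof (cases "x = ?L - 1")
    case True
    show ?thesis using gL True unfolding a_def M_def J_def by (cases "even (?D - 1)") (auto, presburger+)
  next
    case False
    then have "sidx hs x < J" using small x by simp
    then show ?thesis unfolding g_def a_def M_def J_def
      by (cases "even (sidx hs x)") (auto, presburger+)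
  qed
  have wle: "\<omega> n \<le> M" for n
  proof (cases "n < ?L")
    case True
    have "nat (g a l n) \<le> M" using rng[OF True] by linarith
    then show ?thesis using True by (simp add: \<omega>_def)
  qed (simp add: \<omega>_def)
  have bnd: "\<forall>n. \<omega> n < N"
  proof
    fix n have "M < N" using N D1 M_def by simp
    then show "\<omega> n < N" using wle[of n] by simp
  qed
  have "R \<omega>"
  proof (rule G)
    fix p q assume p: "p < ?L" and q: "q < ?L" and pq: "kap hs p < kap hs q"
    have Mg: "g a l p \<le> g a l q \<and>
      (g a l p = g a l q \<longrightarrow> (\<forall>x. x < ?L \<longrightarrow> Suc x \<noteq> ?L \<longrightarrow> lastp x \<longrightarrow> l x) \<longrightarrow>
       Suc p \<noteq> ?L \<longrightarrow> Suc q \<noteq> ?L \<longrightarrow>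
       Suc p < ?L \<and> Suc q < ?L \<and> kap hs (Suc p) < kap hs (Suc q))"
      by (rule g_mono[OF H1 p q pq])
    have H2: "\<forall>x. x < ?L \<longrightarrow> Suc x \<noteq> ?L \<longrightarrow> lastp x \<longrightarrow> l x" by (simp add: l_def)
    have wp: "\<omega> p = nat (g a l p)" "\<omega> q = nat (g a l q)" using p q by (simp_all add: \<omega>_def)
    have r0: "0 \<le> g a l p" "0 \<le> g a l q" using rng p q by auto
    have pq_ne: "p \<noteq> q" using pq by auto
    show "\<omega> p < \<omega> q \<or> (\<omega> p = \<omega> q \<and> ((Suc p < ?L \<and> Suc q < ?L \<and> kap hs (Suc p) < kap hs (Suc q))
        \<or> lex_less (shift (Suc p) \<omega>) (shift (Suc q) \<omega>)))"
    proof (cases "g a l p < g a l q")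
      case True then show ?thesis using wp r0 by simp
    next
      case False
      then have eq: "g a l p = g a l q" using Mg by simp
      have weq: "\<omega> p = \<omega> q" using wp eq by simp
      show ?thesis
      proof (cases "Suc p = ?L")
        case spL: True
        then have pL: "p = ?L - 1" by simp
        have qs: "q < ?L - 1" using q pq_ne pL by simp
        have evJ: "even J"
        proof (rule ccontr)
          assume "odd J"
          then have "kap hs p = int p" using kap_sidx_odd[of p] sL pL by simp
          moreover have "kap hs q \<le> int q" by (rule kap_le)
          ultimately show False using pq qs pL by simp
        qed
        have a0: "a = int (J div 2)" using evJ unfolding a_def J_def using D1 by presburger
        have gq0: "g a l q = 0" using eq pL gL evJ a0 by simp
        define k where "k = sidx hs q"
        have kJ: "k < J" using small qs k_def by simp
        have ek: "even k"
        proof (rule ccontr)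
          assume "odd k"
          then have "g a l q \<ge> a" by (simp add: g_def k_def[symmetric])
          moreover have "1 \<le> J div 2" using evJ J1 by presburger
          ultimately show False using gq0 a0 by simp
        qed
        have lq: "l q" and kk: "k div 2 + 1 = J div 2"
        proof -
          have gq: "g a l q = a - int (k div 2) - (if l q then 1 else 0)" using ek by (simp add: g_def k_def[symmetric])
          have "k div 2 < J div 2" using kJ ek evJ by presburger
          then show "l q" "k div 2 + 1 = J div 2" using gq gq0 a0 by (auto split: if_splits)
        qed
        have sS: "sidx hs (Suc q) = Suc k" using lp_Suc[of q] lq k_def by (simp add: l_def)
        have SqL: "Suc q < ?L" using sS kJ J1 lt_L_of_sidx by simp
        have "g a l (Suc q) \<ge> a" using sS ek by (simp add: g_def)
        moreover have "1 \<le> J div 2" using evJ J1 by presburger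
        ultimately have "0 < \<omega> (Suc q)" using SqL a0 by (simp add: \<omega>_def)
        moreover have "\<omega> ?L = 0" using evJ by (simp add: \<omega>_def)
        ultimately have "lex_less (shift (Suc p) \<omega>) (shift (Suc q) \<omega>)"
          unfolding lex_less_def shift_def using spL by (intro exI[of _ 0]) simp
        then show ?thesis using weq by simp
      next
        case spL: False
        show ?thesis
        proof (cases "Suc q = ?L")
          case sqL: True
          then have qL: "q = ?L - 1" by simp
          have ps: "p < ?L - 1" using p pq_ne qL by simp
          have odJ: "odd J"
          proof
            assume "even J"
            then have "kap hs q = - int q" using kap_sidx_even[of q] sL qL by simp
            moreover have "- int p \<le> kap hs p" by (rule kap_ge)
            ultimately show False using pq ps qL by simp
          qed
          have gpM: "g a l p = int M" using eq qL gL odJ unfolding a_def M_def J_def using D1 by presburger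
          define r where "r = ?L - 2"
          have rT: "r = T J" using eJ by (simp add: T_def r_def)
          have sr: "sidx hs r = J - 1" using sidx_T[of J] J1 rT by simp
          have Sr: "Suc r = ?L - 1" using eJ J1 e_pos[of J] r_def by simp
          have ne: "J \<noteq> J - 1" "?L - 1 \<noteq> ?L" using J1 Lpos by linarith+
          have lr: "l r" unfolding l_def lastp_def using sr Sr sL ne by simp
          have evr: "even (J - 1)" using odJ J1 by simp
          have gr: "g a l r = a - int ((J - 1) div 2) - 1" using sr lr evr by (simp add: g_def)
          have grM: "g a l r < int M" using gr unfolding a_def M_def J_def using D1 by linarith
          have rL: "r < ?L" using r_def Lpos by simp
          have wr: "\<omega> r < M" using grM rL rng[OF rL] by (simp add: \<omega>_def nat_less_iff)
          have pr: "Suc p \<le> r" using ps r_def gpM grM by (cases "p = r") auto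
          have "lex_less (shift (Suc p) \<omega>) (\<lambda>_. M)"
          proof (rule lex_const)
            show "\<forall>n. shift (Suc p) \<omega> n \<le> M" using wle by (simp add: shift_def)
            show "shift (Suc p) \<omega> (r - Suc p) < M" using wr pr by (simp add: shift_def)
          qed
          moreover have "shift (Suc q) \<omega> = (\<lambda>_. M)" using sqL odJ by (auto simp: shift_def \<omega>_def)
          ultimately show ?thesis using weq by simp
        next
          case sqL: False
          then show ?thesis using Mg eq H2 spL weq by simp
        qed
      qed
    qed
  qed
  then show ?thesis using bnd by blast
qed

end


lemma mirror_rev: "spiral_mirror hs = rev (spiral hs)"
  unfolding spiral_mirror_def spiral_def by (simp add: rev_concat rev_map o_def)

context sp begin

lemma allowed_spiral: "allowed N (spiral hs) \<longleftrightarrow> (\<exists>\<omega>. (\<forall>n. \<omega> n < N) \<and> R \<omega>)"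
  unfolding allowed_def defines_iff_key[OF sorted_spiral set_spiral] R_def by blast

lemma allowed_mirror: "allowed N (spiral_mirror hs) \<longleftrightarrow> (\<exists>\<omega>. (\<forall>n. \<omega> n < N) \<and> R \<omega>)"
proof -
  let ?L = "sum_list hs"
  have s: "sorted_wrt (\<lambda>a b. - kap hs a < - kap hs b) (spiral_mirror hs)"
    unfolding mirror_rev sorted_wrt_rev using sorted_spiral by simp
  have st: "set (spiral_mirror hs) = {0..<?L}" unfolding mirror_rev using set_spiral by simp
  have A: "allowed N (spiral_mirror hs) \<longleftrightarrow> (\<exists>\<omega>. (\<forall>n. \<omega> n < N) \<and>
      (\<forall>p q. p < ?L \<longrightarrow> q < ?L \<longrightarrow> - kap hs p < - kap hs q \<longrightarrow> lex_less (shift p \<omega>) (shift q \<omega>)))"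
    unfolding allowed_def defines_iff_key[OF s st] by blast
  show ?thesis unfolding A
  proof
    assume "\<exists>\<omega>. (\<forall>n. \<omega> n < N) \<and>
      (\<forall>p q. p < ?L \<longrightarrow> q < ?L \<longrightarrow> - kap hs p < - kap hs q \<longrightarrow> lex_less (shift p \<omega>) (shift q \<omega>))"
    then obtain \<omega> where b: "\<forall>n. \<omega> n < N" and h: "\<forall>p q. p < ?L \<longrightarrow> q < ?L \<longrightarrow> - kap hs p < - kap hs q \<longrightarrow> lex_less (shift p \<omega>) (shift q \<omega>)"
      by blast
    have "R (cmp N \<omega>)" unfolding R_def
    proof (intro allI impI)
      fix p q assume "p < ?L" "q < ?L" "kap hs p < kap hs q"
      then have "lex_less (shift q \<omega>) (shift p \<omega>)" using h by simp
      then show "lex_less (shift p (cmp N \<omega>)) (shift q (cmp N \<omega>))" using cmp_lex[OF b] by blast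
    qed
    then show "\<exists>\<omega>. (\<forall>n. \<omega> n < N) \<and> R \<omega>" using cmp_bound[OF b] by blast
  next
    assume "\<exists>\<omega>. (\<forall>n. \<omega> n < N) \<and> R \<omega>"
    then obtain \<omega> where b: "\<forall>n. \<omega> n < N" and h: "R \<omega>" by blast
    have "\<forall>p q. p < ?L \<longrightarrow> q < ?L \<longrightarrow> - kap hs p < - kap hs q \<longrightarrow> lex_less (shift p (cmp N \<omega>)) (shift q (cmp N \<omega>))"
    proof (intro allI impI)
      fix p q assume "p < ?L" "q < ?L" "- kap hs p < - kap hs q"
      then have "lex_less (shift q \<omega>) (shift p \<omega>)" using h R_lt by simp
      then show "lex_less (shift p (cmp N \<omega>)) (shift q (cmp N \<omega>))" using cmp_lex[OF b] by blast
    qed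
    then show "\<exists>\<omega>. (\<forall>n. \<omega> n < N) \<and>
      (\<forall>p q. p < ?L \<longrightarrow> q < ?L \<longrightarrow> - kap hs p < - kap hs q \<longrightarrow> lex_less (shift p \<omega>) (shift q \<omega>))"
      using cmp_bound[OF b] by blast
  qed
qed

lemma core:
  assumes h0: "2 \<le> hs ! 0" and D2: "2 \<le> length hs"
  shows "(\<exists>\<omega>. (\<forall>n. \<omega> n < N) \<and> R \<omega>) \<longleftrightarrow> (length hs \<le> N \<and> (2 \<le> last hs \<longrightarrow> length hs + 1 \<le> N))"
proof
  assume "\<exists>\<omega>. (\<forall>n. \<omega> n < N) \<and> R \<omega>"
  then show "length hs \<le> N \<and> (2 \<le> last hs \<longrightarrow> length hs + 1 \<le> N)" using forb[OF h0 D2] by blast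
next
  assume a: "length hs \<le> N \<and> (2 \<le> last hs \<longrightarrow> length hs + 1 \<le> N)"
  have hsne: "hs \<noteq> []" using D2 by auto
  have "1 \<le> last hs" using pos last_in_set[OF hsne] by blast
  then show "\<exists>\<omega>. (\<forall>n. \<omega> n < N) \<and> R \<omega>"
  proof (cases "last hs = 1")
    case True then show ?thesis using allowB[OF D2 _ True] a by blast
  next
    case False then show ?thesis using allowA[OF D2] a \<open>1 \<le> last hs\<close> by simp
  qed
qed

end

theorem lemma1:
  fixes N :: nat and hs :: "nat list" and \<pi> :: "nat list"
  assumes "N \<ge> 2"
    and "length hs \<ge> 2"
    and "\<forall>h\<in>set hs. h \<ge> 1"
    and "hs ! 0 \<ge> 2"
    and "\<pi> = spiral hs \<or> \<pi> = spiral_mirror hs"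
  shows "forbidden N \<pi> \<longleftrightarrow>
           ((length hs \<ge> N \<and> last hs \<ge> 2) \<or> (length hs \<ge> N + 1 \<and> last hs = 1))"
proof -
  interpret sp hs using assms(3) by (unfold_locales) simp
  have al: "allowed N \<pi> \<longleftrightarrow> (length hs \<le> N \<and> (2 \<le> last hs \<longrightarrow> length hs + 1 \<le> N))"
    using assms(5) allowed_spiral allowed_mirror core[OF assms(4) assms(2)] by auto
  have hsne: "hs \<noteq> []" using assms(2) by auto
  have "1 \<le> last hs" using assms(3) last_in_set[OF hsne] by blast
  then show ?thesis unfolding forbidden_def al by auto
qed


end
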